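(* There exists a countable two-dimensional subshift of finite type $X$ whose Cantor–Bendixson rank is at least $\omega$.
   Context: A two-dimensional subshift over a finite alphabet $S$ is a closed subset of $S^{\mathbb{Z}^2}$ (product topology) invariant under both coordinate shifts; it is of finite type (SFT) if it is the set of configurations avoiding a finite set of forbidden finite patterns. Derivatives: $X^{(0)} = X$, $X^{(\alpha+1)}$ is the set of non-isolated points of $X^{(\alpha)}$, and $X^{(\lambda)} = \bigcap_{\alpha<\lambda} X^{(\alpha)}$ for limit $\lambda$. The rank of $X$ is the least ordinal $\lambda$ with $X^{(\lambda)} = X^{(\lambda+1)}$. *)

theory Defs
  imports "HOL-Analysis.Analysis"
begin

text \<open>The function type carries the product topology (Function_Topology) and nat carries
  the discrete topology, so this is the product topology on S^(Z^2).\<close>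

type_synonym config = "int \<times> int \<Rightarrow> nat"

definition occurs :: "(int \<times> int \<rightharpoonup> nat) \<Rightarrow> config \<Rightarrow> bool" where
  "occurs p x \<longleftrightarrow> (\<exists>a b. \<forall>u\<in>dom p. p u = Some (x (fst u + a, snd u + b)))"

definition is_SFT :: "nat set \<Rightarrow> config set \<Rightarrow> bool" where
  "is_SFT S X \<longleftrightarrow> finite S \<and>
     (\<exists>F. finite F \<and> (\<forall>p\<in>F. finite (dom p) \<and> ran p \<subseteq> S) \<and>
          X = {x. range x \<subseteq> S \<and> (\<forall>p\<in>F. \<not> occurs p x)})"

definition cb_deriv :: "config set \<Rightarrow> config set" where
  "cb_deriv A = {x \<in> A. x islimpt A}"

definition cb_iter :: "nat \<Rightarrow> config set \<Rightarrow> config set" where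
  "cb_iter n A = (cb_deriv ^^ n) A"

end

theory Submission
  imports Defs
begin


lemma cyl_open:
  fixes x :: "'a \<Rightarrow> 'b::discrete_topology"
  assumes "finite W"
  shows "open {y. \<forall>u\<in>W. y u = x u}"
proof -
  have "open {f::'a\<Rightarrow>'b. \<forall>i\<in>W. f (id i) \<in> {x i}}"
    by (rule product_topology_basis') (auto simp: assms open_discrete)
  then show ?thesis by simp
qed

lemma limpt_cyl:
  fixes x :: "'a \<Rightarrow> 'b::topological_space"
  assumes H: "\<And>W. finite W \<Longrightarrow> \<exists>y\<in>A. y \<noteq> x \<and> (\<forall>u\<in>W. y u = x u)"
  shows "x islimpt A"
proof (rule islimptI)
  fix T assume "x \<in> T" "open T"
  then have "openin (product_topology (\<lambda>i. euclidean) UNIV) T" by (simp add: open_fun_def)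
  then obtain X where X: "x \<in> (\<Pi>\<^sub>E i\<in>UNIV. X i)" "\<forall>i. openin euclidean (X i)"
     "finite {i. X i \<noteq> topspace euclidean}" "(\<Pi>\<^sub>E i\<in>UNIV. X i) \<subseteq> T"
    using product_topology_open_contains_basis[OF \<open>openin _ T\<close> \<open>x \<in> T\<close>] by blast
  obtain y where y: "y \<in> A" "y \<noteq> x" "\<forall>u\<in>{i. X i \<noteq> topspace euclidean}. y u = x u"
    using H[OF X(3)] by blast
  have "y \<in> (\<Pi>\<^sub>E i\<in>UNIV. X i)"
    unfolding PiE_iff
  proof (intro conjI ballI)
    fix i :: 'a
    show "y i \<in> X i"
      using X(1) y(3) by (cases "X i = UNIV") (auto simp: PiE_iff)
  qed simp
  then show "\<exists>y\<in>A. y \<in> T \<and> y \<noteq> x" using X(4) y by blast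
qed

lemma limpt_cylD:
  fixes x :: "'a \<Rightarrow> 'b::discrete_topology"
  assumes "x islimpt A" "finite W"
  shows "\<exists>y\<in>A. y \<noteq> x \<and> (\<forall>u\<in>W. y u = x u)"
  using islimptE[OF assms(1) _ cyl_open[OF assms(2), of x]] by auto

lemma closed_deriv:
  fixes A :: "('a \<Rightarrow> 'b::discrete_topology) set"
  assumes "closed A"
  shows "closed {x\<in>A. x islimpt A}"
  unfolding closed_limpt
proof (intro allI impI)
  fix z assume z: "z islimpt {x \<in> A. x islimpt A}"
  have "z islimpt A"
  proof (rule limpt_cyl)
    fix W :: "'a set" assume W: "finite W"
    obtain x where x: "x \<in> A" "x islimpt A" "x \<noteq> z" "\<forall>u\<in>W. x u = z u"
      using limpt_cylD[OF z W] by blast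
    obtain u0 where u0: "x u0 \<noteq> z u0" using x(3) by blast
    obtain a where a: "a \<in> A" "a \<noteq> x" "\<forall>u\<in>insert u0 W. a u = x u"
      using limpt_cylD[OF x(2), of "insert u0 W"] W by blast
    show "\<exists>y\<in>A. y \<noteq> z \<and> (\<forall>u\<in>W. y u = z u)"
      using a x u0 by (intro bexI[of _ a]) auto
  qed
  then show "z \<in> {x \<in> A. x islimpt A}"
    using assms closed_limpt by blast
qed

lemma closed_singleton_fun:
  fixes k :: "'a \<Rightarrow> 'b::discrete_topology"
  shows "closed {k}"
  unfolding closed_def
proof (subst open_subopen, intro ballI)
  fix y assume "y \<in> - {k}"
  then obtain u where u: "y u \<noteq> k u" by auto
  show "\<exists>T. open T \<and> y \<in> T \<and> T \<subseteq> - {k}"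
    using u cyl_open[of "{u}" y] by (intro exI[of _ "{f. \<forall>v\<in>{u}. f v = y v}"]) auto
qed

lemma compact_fin:
  assumes "finite S"
  shows "compact {x :: 'a \<Rightarrow> 'b::discrete_topology. range x \<subseteq> S}"
proof -
  have "compactin (product_topology (\<lambda>i. euclidean) UNIV) (PiE UNIV (\<lambda>i::'a. S))"
    by (subst compactin_PiE) (auto simp: assms finite_imp_compact)
  moreover have "PiE UNIV (\<lambda>i::'a. S) = {x :: 'a \<Rightarrow> 'b. range x \<subseteq> S}"
    by (auto simp: PiE_iff)
  ultimately show ?thesis
    by (simp add: euclidean_product_topology)
qed

lemma hausdorff_nat: "Hausdorff_space (euclidean :: nat topology)"
  unfolding Hausdorff_space_def
proof (intro allI impI)
  fix x y :: nat assume "x \<in> topspace euclidean \<and> y \<in> topspace euclidean \<and> x \<noteq> y"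
  then show "\<exists>U V. openin euclidean U \<and> openin euclidean V \<and> x \<in> U \<and> y \<in> V \<and> disjnt U V"
    by (intro exI[of _ "{x}"] exI[of _ "{y}"]) (auto simp: open_discrete disjnt_def)
qed

lemma hausdorff_fun: "Hausdorff_space (euclidean :: ('a \<Rightarrow> nat) topology)"
proof -
  have "Hausdorff_space (product_topology (\<lambda>i::'a. (euclidean :: nat topology)) UNIV)"
    by (simp add: Hausdorff_space_product_topology hausdorff_nat)
  then show ?thesis by (simp add: euclidean_product_topology)
qed

lemma no_perfect:
  fixes K :: "('a \<Rightarrow> nat) set"
  assumes "compact K" "countable K" "K \<noteq> {}" "\<forall>x\<in>K. x islimpt K"
  shows False
proof -
  let ?X = "top_of_set K"
  have cs: "compact_space ?X"
    using assms(1) by (simp add: compact_space_subtopology)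
  have hs: "Hausdorff_space ?X"
    by (rule Hausdorff_space_subtopology[OF hausdorff_fun])
  have lc: "locally_compact_space ?X" using cs compact_imp_locally_compact_space by blast
  have rs: "regular_space ?X" using cs hs compact_Hausdorff_imp_regular_space by blast
  have "?X interior_of \<Union>((\<lambda>k. {k}) ` K) = {}"
  proof (rule Baire_category_alt)
    show "completely_metrizable_space ?X \<or> locally_compact_space ?X \<and> regular_space ?X"
      using lc rs by blast
    show "countable ((\<lambda>k. {k}) ` K)" using assms(2) by blast
    fix T assume "T \<in> (\<lambda>k. {k}) ` K"
    then obtain k where k: "k \<in> K" "T = {k}" by blast
    have "closedin ?X {k}"
      using k closed_singleton_fun[of k] by (simp add: closedin_closed) blast
    moreover have "?X interior_of {k} = {}"
    proof (rule ccontr)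
      assume "?X interior_of {k} \<noteq> {}"
      then have "openin ?X {k}"
        by (metis interior_of_subset openin_interior_of subset_singletonD)
      then obtain U where U: "open U" "{k} = K \<inter> U" by (auto simp: openin_open)
      then obtain y where "y \<in> K" "y \<in> U" "y \<noteq> k"
        using k(1) assms(4) islimptE[of k K U] by blast
      then show False using U by blast
    qed
    ultimately show "closedin ?X T \<and> ?X interior_of T = {}" using k by simp
  qed
  moreover have "\<Union>((\<lambda>k. {k}) ` K) = topspace ?X" by auto
  moreover have "?X interior_of topspace ?X = topspace ?X" by (rule interior_of_topspace)
  ultimately show False using assms(3) by simp
qed



definition code :: "bool \<Rightarrow> bool \<Rightarrow> bool \<Rightarrow> bool \<Rightarrow> bool \<Rightarrow> nat" where
  "code a c b t f = of_bool a + 2 * (of_bool c + 2 * (of_bool b + 2 * (of_bool t + 2 * of_bool f)))"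

definition bA :: "nat \<Rightarrow> bool" where "bA v = odd v"
definition bC :: "nat \<Rightarrow> bool" where "bC v = odd (v div 2)"
definition bB :: "nat \<Rightarrow> bool" where "bB v = odd (v div 4)"
definition bT :: "nat \<Rightarrow> bool" where "bT v = odd (v div 8)"
definition bF :: "nat \<Rightarrow> bool" where "bF v = odd (v div 16)"

lemma code_bits [simp]:
  "bA (code a c b t f) = a" "bC (code a c b t f) = c" "bB (code a c b t f) = b"
  "bT (code a c b t f) = t" "bF (code a c b t f) = f"
  by (simp_all add: code_def bA_def bC_def bB_def bT_def bF_def div_mult2_eq[symmetric] of_bool_def)

lemma code_lt: "code a c b t f < 32"
  by (simp add: code_def of_bool_def)

lemma code_decomp_all: "\<forall>v\<in>{..<32::nat}. code (bA v) (bC v) (bB v) (bT v) (bF v) = v"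
  by (simp add: lessThan_nat_numeral code_def bA_def bC_def bB_def bT_def bF_def)

lemma code_decomp: "v < 32 \<Longrightarrow> code (bA v) (bC v) (bB v) (bT v) (bF v) = v"
  using code_decomp_all by simp



definition strip :: "nat \<Rightarrow> bool" where "strip v \<longleftrightarrow> bA v \<and> bC v"

definition cellok :: "nat \<Rightarrow> bool" where
  "cellok v \<longleftrightarrow> (\<not> bA v \<longrightarrow> bC v \<and> bB v \<and> bT v \<and> \<not> bF v) \<and> (bB v \<longrightarrow> bC v) \<and>
     (bT v \<longrightarrow> bC v) \<and> (bF v \<longrightarrow> bA v \<and> bC v)"

definition vert :: "nat \<Rightarrow> nat \<Rightarrow> bool" where
  "vert L U \<longleftrightarrow> (bA L \<longrightarrow> bA U) \<and> (bC U \<longrightarrow> bC L) \<and> (bB U \<longrightarrow> bB L) \<and> (bT U \<longrightarrow> bT L) \<and>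
     (strip L \<and> strip U \<longrightarrow> (bF L \<longleftrightarrow> bF U))"

definition horiz :: "nat \<Rightarrow> nat \<Rightarrow> bool" where
  "horiz P Q \<longleftrightarrow> (bA P \<longleftrightarrow> bA Q) \<and> (bC P \<longleftrightarrow> bC Q)"

definition trw :: "nat \<Rightarrow> nat \<Rightarrow> nat \<Rightarrow> nat \<Rightarrow> bool" where
  "trw P Q P' Q' \<longleftrightarrow>
     (strip Q' \<longrightarrow> (if bF Q' then \<not> bT Q' \<and> (bT P' \<longleftrightarrow> bC P') else (bT Q' \<longleftrightarrow> bT P))) \<and>
     (strip Q \<longrightarrow> (if bF Q then (bB Q \<longleftrightarrow> bB P') else (bB Q \<longleftrightarrow> bB P))) \<and>
     (bF Q' \<and> \<not> bA Q \<longrightarrow> bB P')"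

definition okw :: "nat \<Rightarrow> nat \<Rightarrow> nat \<Rightarrow> nat \<Rightarrow> bool" where
  "okw P Q P' Q' \<longleftrightarrow> cellok P \<and> cellok Q \<and> cellok P' \<and> cellok Q' \<and> vert P P' \<and> vert Q Q' \<and>
     horiz P Q \<and> horiz P' Q' \<and> trw P Q P' Q'"

definition XX :: "config set" where
  "XX = {x. range x \<subseteq> {..<32} \<and> (\<forall>i j. okw (x (i,j)) (x (i+1,j)) (x (i,j+1)) (x (i+1,j+1)))}"

definition pat :: "nat \<Rightarrow> nat \<Rightarrow> nat \<Rightarrow> nat \<Rightarrow> (int \<times> int \<rightharpoonup> nat)" where
  "pat p q r s = [(0,0) \<mapsto> p, (1,0) \<mapsto> q, (0,1) \<mapsto> r, (1,1) \<mapsto> s]"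

lemma dom_pat: "dom (pat p q r s) = {(0,0),(1,0),(0,1),(1,1)}"
  by (auto simp: pat_def)

lemma occurs_pat:
  "occurs (pat p q r s) x \<longleftrightarrow> (\<exists>a b. x (a,b) = p \<and> x (a+1,b) = q \<and> x (a,b+1) = r \<and> x (a+1,b+1) = s)"
  unfolding occurs_def dom_pat by (auto simp: pat_def add.commute)

lemma XX_SFT: "is_SFT {..<32} XX"
proof -
  define Bad where "Bad = {(p,q,r,s). p < 32 \<and> q < 32 \<and> r < 32 \<and> s < (32::nat) \<and> \<not> okw p q r s}"
  define F where "F = (\<lambda>(p,q,r,s). pat p q r s) ` Bad"
  have "Bad \<subseteq> {..<32} \<times> {..<32} \<times> {..<32} \<times> {..<32}" by (auto simp: Bad_def)
  then have "finite Bad" by (rule finite_subset) auto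
  then have fF: "finite F" by (simp add: F_def)
  have pF: "\<forall>p\<in>F. finite (dom p) \<and> ran p \<subseteq> {..<32}"
    by (auto simp: F_def Bad_def dom_pat pat_def ran_def)
  have "XX = {x. range x \<subseteq> {..<32} \<and> (\<forall>p\<in>F. \<not> occurs p x)}"
  proof (intro set_eqI iffI)
    fix x assume x: "x \<in> XX"
    have "\<not> occurs p x" if "p \<in> F" for p
      using that x by (auto simp: F_def Bad_def occurs_pat XX_def)
    then show "x \<in> {x. range x \<subseteq> {..<32} \<and> (\<forall>p\<in>F. \<not> occurs p x)}"
      using x by (simp add: XX_def)
  next
    fix x assume "x \<in> {x. range x \<subseteq> {..<32} \<and> (\<forall>p\<in>F. \<not> occurs p x)}"
    then have r: "range x \<subseteq> {..<32}" and n: "\<forall>p\<in>F. \<not> occurs p x" by auto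
    show "x \<in> XX" unfolding XX_def
    proof (clarsimp simp: r)
      fix i j
      show "okw (x (i,j)) (x (i+1,j)) (x (i,j+1)) (x (i+1,j+1))"
      proof (rule ccontr)
        assume "\<not> ?thesis"
        then have "pat (x (i,j)) (x (i+1,j)) (x (i,j+1)) (x (i+1,j+1)) \<in> F"
          using r unfolding F_def Bad_def
          by (intro image_eqI[where x="(x (i,j), x (i+1,j), x (i,j+1), x (i+1,j+1))"]) auto
        moreover have "occurs (pat (x (i,j)) (x (i+1,j)) (x (i,j+1)) (x (i+1,j+1))) x"
          unfolding occurs_pat by blast
        ultimately show False using n by blast
      qed
    qed
  qed
  then show ?thesis unfolding is_SFT_def using fF pF by blast
qed

lemma XX_closed: "closed XX"
  unfolding closed_limpt
proof (intro allI impI)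
  fix x assume x: "x islimpt XX"
  have "x (u) < 32" for u
  proof -
    obtain y where "y \<in> XX" "y u = x u" using limpt_cylD[OF x, of "{u}"] by auto
    then show ?thesis by (auto simp: XX_def) (metis lessThan_iff rangeI subsetD)
  qed
  moreover have "okw (x (i,j)) (x (i+1,j)) (x (i,j+1)) (x (i+1,j+1))" for i j
  proof -
    obtain y where "y \<in> XX" "\<forall>u\<in>{(i,j),(i+1,j),(i,j+1),(i+1,j+1)}. y u = x u"
      using limpt_cylD[OF x, of "{(i,j),(i+1,j),(i,j+1),(i+1,j+1)}"] by auto
    then show ?thesis unfolding XX_def by (metis (no_types, lifting) insertCI mem_Collect_eq)
  qed
  ultimately show "x \<in> XX" by (auto simp: XX_def)
qed

lemma XX_bounded: "XX \<subseteq> {x. range x \<subseteq> {..<32}}"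
  by (auto simp: XX_def)



definition good :: "nat \<Rightarrow> int set \<Rightarrow> bool" where
  "good n P \<longleftrightarrow> 0 < n \<and> finite P \<and> card P \<le> n \<and> (\<forall>p\<in>P. \<forall>q\<in>P. p < q \<longrightarrow> int n < q - p)"

definition Lw :: "int set \<Rightarrow> int \<Rightarrow> int set" where "Lw P i = {p\<in>P. p \<le> i}"

definition Bf :: "nat \<Rightarrow> int set \<Rightarrow> int \<Rightarrow> int" where
  "Bf n P i = int n - int (card (Lw P i))"

definition Tf :: "nat \<Rightarrow> int set \<Rightarrow> int \<Rightarrow> int" where
  "Tf n P i = (if Lw P i = {} then int n else min (int n) (i - Max (Lw P i)))"

definition G :: "nat \<Rightarrow> int set \<Rightarrow> config" where
  "G n P = (\<lambda>(i,y). code (0 \<le> y) (y < int n) (y < Bf n P i) (y < Tf n P i) (i \<in> P \<and> 0 \<le> y \<and> y < int n))"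

lemma Lw_Suc: "Lw P (i+1) = (if i+1 \<in> P then insert (i+1) (Lw P i) else Lw P i)"
proof (rule set_eqI)
  fix x show "x \<in> Lw P (i+1) \<longleftrightarrow> x \<in> (if i+1 \<in> P then insert (i+1) (Lw P i) else Lw P i)"
    by (cases "x = i+1") (auto simp: Lw_def)
qed

lemma Bf_range: assumes "good n P" shows "0 \<le> Bf n P i" "Bf n P i \<le> int n"
proof -
  have "card (Lw P i) \<le> card P" using assms by (intro card_mono) (auto simp: good_def Lw_def)
  then show "0 \<le> Bf n P i" using assms by (simp add: Bf_def good_def)
  show "Bf n P i \<le> int n" by (simp add: Bf_def)
qed

lemma Tf_range: assumes "good n P" shows "0 \<le> Tf n P i" "Tf n P i \<le> int n"
proof -
  have fin: "finite (Lw P i)" using assms by (auto simp: good_def Lw_def)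
  show "0 \<le> Tf n P i"
  proof (cases "Lw P i = {}")
    case False
    then have "Max (Lw P i) \<in> Lw P i" using fin by simp
    then show ?thesis using False by (auto simp: Tf_def Lw_def)
  qed (simp add: Tf_def)
  show "Tf n P i \<le> int n" by (simp add: Tf_def)
qed

lemma step_in:
  assumes g: "good n P" and i: "i+1 \<in> P"
  shows "Bf n P (i+1) = Bf n P i - 1" "1 \<le> Bf n P i" "Tf n P (i+1) = 0" "Tf n P i = int n"
proof -
  have fin: "finite (Lw P i)" using g by (auto simp: good_def Lw_def)
  have nin: "i+1 \<notin> Lw P i" by (simp add: Lw_def)
  show "Bf n P (i+1) = Bf n P i - 1"
    using fin nin i by (simp add: Bf_def Lw_Suc)
  have "Lw P i \<subseteq> P" by (auto simp: Lw_def)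
  moreover have "Lw P i \<noteq> P" using i nin by blast
  ultimately
  have "Lw P i \<subset> P" by blast
  then have "card (Lw P i) < card P" using g by (intro psubset_card_mono) (auto simp: good_def)
  then show "1 \<le> Bf n P i" using g by (simp add: Bf_def good_def)
  have "Max (insert (i+1) (Lw P i)) = i+1"
    using fin by (intro Max_eqI) (auto simp: Lw_def)
  then show "Tf n P (i+1) = 0" using i by (simp add: Tf_def Lw_Suc)
  show "Tf n P i = int n"
  proof (cases "Lw P i = {}")
    case False
    then have m: "Max (Lw P i) \<in> Lw P i" using fin by simp
    then have "Max (Lw P i) \<in> P" "Max (Lw P i) < i+1" by (auto simp: Lw_def)
    then have "int n < i + 1 - Max (Lw P i)" using g i by (auto simp: good_def)
    then show ?thesis using False by (simp add: Tf_def)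
  qed (simp add: Tf_def)
qed

lemma step_out:
  assumes g: "good n P" and i: "i+1 \<notin> P"
  shows "Bf n P (i+1) = Bf n P i" "Tf n P (i+1) = min (int n) (Tf n P i + 1)"
proof -
  have L: "Lw P (i+1) = Lw P i" using Lw_Suc[of P i] i by simp
  show "Bf n P (i+1) = Bf n P i" unfolding Bf_def L ..
  show "Tf n P (i+1) = min (int n) (Tf n P i + 1)"
    unfolding Tf_def L by (auto simp: min_def)
qed

lemma G_bits:
  "bA (G n P (i,y)) = (0 \<le> y)" "bC (G n P (i,y)) = (y < int n)" "bB (G n P (i,y)) = (y < Bf n P i)"
  "bT (G n P (i,y)) = (y < Tf n P i)" "bF (G n P (i,y)) = (i \<in> P \<and> 0 \<le> y \<and> y < int n)"
  by (simp_all add: G_def)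

lemma G_cell: assumes g: "good n P" shows "cellok (G n P (i,j))"
  using Bf_range[OF g, of i] Tf_range[OF g, of i] by (auto simp: cellok_def G_bits)

lemma G_vert: "vert (G n P (i,j)) (G n P (i,j+1))"
  by (auto simp: vert_def G_bits strip_def)

lemma G_horiz: "horiz (G n P (i,j)) (G n P (i+1,j))"
  by (auto simp: horiz_def G_bits)

lemma G_trans: assumes g: "good n P"
  shows "trw (G n P (i,j)) (G n P (i+1,j)) (G n P (i,j+1)) (G n P (i+1,j+1))"
proof (cases "i+1 \<in> P")
  case True
  note s = step_in[OF g True]
  show ?thesis unfolding trw_def strip_def G_bits using s True by auto
next
  case False
  note s = step_out[OF g False]
  show ?thesis unfolding trw_def strip_def G_bits using s False by auto
qed

lemma G_in: assumes g: "good n P" shows "G n P \<in> XX"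
  unfolding XX_def okw_def
  using G_cell[OF g] G_vert G_horiz G_trans[OF g] by (auto simp: G_def code_lt)



definition H :: "nat \<Rightarrow> config set" where
  "H m = {G n P | n P. good n P \<and> card P + m \<le> n}"

lemma H_sub: "H m \<subseteq> XX" using G_in by (auto simp: H_def)

lemma H_mono: "H (Suc m) \<subseteq> H m"
  unfolding H_def by (force)

lemma H_ne: "G (Suc m) {} \<in> H m"
  unfolding H_def by (rule CollectI, rule exI[of _ "Suc m"], rule exI[of _ "{}"]) (simp add: good_def)

lemma G_agree:
  assumes "i < q"
  shows "G n (insert q P) (i,y) = G n P (i,y)"
proof -
  have "Lw (insert q P) i = Lw P i" using assms by (auto simp: Lw_def)
  moreover have "(i \<in> insert q P) = (i \<in> P)" using assms by auto
  ultimately show ?thesis by (simp add: G_def Bf_def Tf_def)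
qed

lemma H_limpt:
  assumes x: "x \<in> H (Suc m)"
  shows "x islimpt H m"
proof -
  obtain n P where xe: "x = G n P" and g: "good n P" and c: "card P + Suc m \<le> n"
    using x by (auto simp: H_def)
  show ?thesis
  proof (rule limpt_cyl)
    fix W :: "(int \<times> int) set" assume W: "finite W"
    define M where "M = Max (insert 0 (P \<union> fst ` W))"
    define q where "q = M + int n + 1"
    have finM: "finite (insert 0 (P \<union> fst ` W))" using W g by (auto simp: good_def)
    have le: "z \<le> M" if "z \<in> insert 0 (P \<union> fst ` W)" for z
      using finM that by (simp add: M_def)
    have n0: "0 < n" using g by (simp add: good_def)
    have qP: "q \<notin> P" using le n0 by (force simp: q_def)
    have g': "good n (insert q P)"
      unfolding good_def
    proof (intro conjI ballI impI)
      show "0 < n" using n0 .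
      show "finite (insert q P)" using g by (simp add: good_def)
      show "card (insert q P) \<le> n" using g qP c by (simp add: good_def)
      fix p p' assume "p \<in> insert q P" "p' \<in> insert q P" "p < p'"
      then show "int n < p' - p"
        using g le[of p] le[of p'] by (auto simp: good_def q_def)
    qed
    have inH: "G n (insert q P) \<in> H m"
      unfolding H_def using g' c qP g by (force simp: good_def)
    have agree: "\<forall>u\<in>W. G n (insert q P) u = x u"
    proof
      fix u assume "u \<in> W"
      then have "fst u \<le> M" using le by auto
      then have "fst u < q" using q_def by simp
      then show "G n (insert q P) u = x u"
        using G_agree[of "fst u" q n P "snd u"] xe by (cases u) simp
    qed
    have "bF (G n (insert q P) (q,0)) \<noteq> bF (G n P (q,0))"
      using qP n0 by (simp add: G_bits)
    then have "G n (insert q P) \<noteq> x" using xe by auto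
    then show "\<exists>y\<in>H m. y \<noteq> x \<and> (\<forall>u\<in>W. y u = x u)" using inH agree by blast
  qed
qed

lemma cb_iter_Suc: "cb_iter (Suc n) A = cb_deriv (cb_iter n A)"
  by (simp add: cb_iter_def)

lemma cb_iter_0: "cb_iter 0 A = A"
  by (simp add: cb_iter_def)

lemma H_cb: "H m \<subseteq> cb_iter m XX"
proof (induction m)
  case 0
  then show ?case using H_sub by (simp add: cb_iter_0)
next
  case (Suc m)
  show ?case
  proof
    fix x assume x: "x \<in> H (Suc m)"
    have "x \<in> cb_iter m XX" using x H_mono Suc by blast
    moreover have "x islimpt cb_iter m XX"
      using H_limpt[OF x] Suc islimpt_subset by blast
    ultimately show "x \<in> cb_iter (Suc m) XX" by (simp add: cb_iter_Suc cb_deriv_def)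
  qed
qed

lemma cb_closed_sub: "closed (cb_iter m XX) \<and> cb_iter m XX \<subseteq> XX"
proof (induction m)
  case 0
  then show ?case using XX_closed by (simp add: cb_iter_0)
next
  case (Suc m)
  then show ?case using closed_deriv[of "cb_iter m XX"]
    by (auto simp: cb_iter_Suc cb_deriv_def)
qed

lemma main_from_countable:
  assumes "countable XX"
  shows "\<exists>S X. is_SFT S X \<and> countable X \<and> (\<forall>n. cb_iter (Suc n) X \<noteq> cb_iter n X)"
proof (intro exI conjI allI)
  show "is_SFT {..<32} XX" by (rule XX_SFT)
  show "countable XX" by (rule assms)
  fix n
  show "cb_iter (Suc n) XX \<noteq> cb_iter n XX"
  proof
    assume eq: "cb_iter (Suc n) XX = cb_iter n XX"
    let ?K = "cb_iter n XX"
    have cl: "closed ?K" and sub: "?K \<subseteq> XX" using cb_closed_sub by auto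
    have "compact ({x. range x \<subseteq> {..<32::nat}} \<inter> ?K)"
      by (rule compact_Int_closed[OF compact_fin cl]) simp
    moreover have "{x. range x \<subseteq> {..<32::nat}} \<inter> ?K = ?K" using sub XX_bounded by blast
    ultimately have cp: "compact ?K" by simp
    have ct: "countable ?K" using sub assms countable_subset by blast
    have ne: "?K \<noteq> {}" using H_ne[of n] H_cb[of n] by blast
    have lp: "\<forall>x\<in>?K. x islimpt ?K"
    proof
      fix x assume "x \<in> ?K"
      then have "x \<in> cb_iter (Suc n) XX" using eq by simp
      then show "x islimpt ?K" by (simp add: cb_iter_Suc cb_deriv_def)
    qed
    show False using no_perfect[OF cp ct ne lp] .
  qed
qed



lemma up_mono:
  fixes a b :: int
  assumes st: "\<And>y. P y \<Longrightarrow> P (y+1)" and ab: "a \<le> b" and Pa: "P a"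
  shows "P b"
  using ab Pa by (induction b rule: int_ge_induct) (auto intro: st)

lemma down_mono:
  fixes a b :: int
  assumes st: "\<And>y. P (y+1) \<Longrightarrow> P y" and ab: "a \<le> b" and Pb: "P b"
  shows "P a"
  using ab Pb
proof (induction a rule: int_le_induct)
  case base then show ?case by simp
next
  case (step i) then show ?case using st[of "i-1"] by simp
qed

lemma okX: "x \<in> XX \<Longrightarrow> okw (x (i,j)) (x (i+1,j)) (x (i,j+1)) (x (i+1,j+1))"
  by (simp add: XX_def)

lemma ltX: "x \<in> XX \<Longrightarrow> x u < 32"
  by (auto simp: XX_def)

context
  fixes x assumes x: "x \<in> XX"
begin

lemma cellX: "cellok (x (i,j))"
  using okX[OF x, of i j] by (simp add: okw_def)

lemma vertX: "vert (x (i,j)) (x (i,j+1))"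
  using okX[OF x, of i j] by (simp add: okw_def)

lemma horizX: "horiz (x (i,j)) (x (i+1,j))"
  using okX[OF x, of i j] by (simp add: okw_def)

lemma transX: "trw (x (i,j)) (x (i+1,j)) (x (i,j+1)) (x (i+1,j+1))"
  using okX[OF x, of i j] by (simp add: okw_def)

lemma notA: "\<not> bA (x (i,j)) \<Longrightarrow> bC (x (i,j)) \<and> bB (x (i,j)) \<and> bT (x (i,j)) \<and> \<not> bF (x (i,j))"
  using cellX[of i j] by (simp add: cellok_def)

lemma B_C: "bB (x (i,j)) \<Longrightarrow> bC (x (i,j))"
  using cellX[of i j] by (simp add: cellok_def)

lemma T_C: "bT (x (i,j)) \<Longrightarrow> bC (x (i,j))"
  using cellX[of i j] by (simp add: cellok_def)

lemma F_AC: "bF (x (i,j)) \<Longrightarrow> bA (x (i,j)) \<and> bC (x (i,j))"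
  using cellX[of i j] by (simp add: cellok_def)

lemma A_up1: "bA (x (i,j)) \<Longrightarrow> bA (x (i,j+1))"
  using vertX[of i j] by (simp add: vert_def)

lemma C_down1: "bC (x (i,j+1)) \<Longrightarrow> bC (x (i,j))"
  using vertX[of i j] by (simp add: vert_def)

lemma B_down1: "bB (x (i,j+1)) \<Longrightarrow> bB (x (i,j))"
  using vertX[of i j] by (simp add: vert_def)

lemma T_down1: "bT (x (i,j+1)) \<Longrightarrow> bT (x (i,j))"
  using vertX[of i j] by (simp add: vert_def)

lemma F_vert1: "strip (x (i,j)) \<Longrightarrow> strip (x (i,j+1)) \<Longrightarrow> bF (x (i,j)) = bF (x (i,j+1))"
  using vertX[of i j] by (simp add: vert_def)

lemma A_h: "bA (x (i+1,j)) = bA (x (i,j))"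
  using horizX[of i j] by (simp add: horiz_def)

lemma C_h: "bC (x (i+1,j)) = bC (x (i,j))"
  using horizX[of i j] by (simp add: horiz_def)

lemma timer_F: "strip (x (i+1,j+1)) \<Longrightarrow> bF (x (i+1,j+1)) \<Longrightarrow>
    \<not> bT (x (i+1,j+1)) \<and> (bT (x (i,j+1)) = bC (x (i,j+1)))"
  using transX[of i j] by (simp add: trw_def)

lemma timer_nF: "strip (x (i+1,j+1)) \<Longrightarrow> \<not> bF (x (i+1,j+1)) \<Longrightarrow>
    bT (x (i+1,j+1)) = bT (x (i,j))"
  using transX[of i j] by (simp add: trw_def)

lemma budget_F: "strip (x (i+1,j)) \<Longrightarrow> bF (x (i+1,j)) \<Longrightarrow> bB (x (i+1,j)) = bB (x (i,j+1))"
  using transX[of i j] by (simp add: trw_def)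

lemma budget_nF: "strip (x (i+1,j)) \<Longrightarrow> \<not> bF (x (i+1,j)) \<Longrightarrow> bB (x (i+1,j)) = bB (x (i,j))"
  using transX[of i j] by (simp add: trw_def)

lemma pos: "bF (x (i+1,j+1)) \<Longrightarrow> \<not> bA (x (i+1,j)) \<Longrightarrow> bB (x (i,j+1))"
  using transX[of i j] by (simp add: trw_def)

lemma A_row: "bA (x (i,y)) = bA (x (0,y))"
proof (induction i rule: int_induct[where k=0])
  case (step1 i) then show ?case using A_h[of i y] by simp
next
  case (step2 i) then show ?case using A_h[of "i-1" y] by simp
qed simp

lemma C_row: "bC (x (i,y)) = bC (x (0,y))"
proof (induction i rule: int_induct[where k=0])
  case (step1 i) then show ?case using C_h[of i y] by simp
next
  case (step2 i) then show ?case using C_h[of "i-1" y] by simp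
qed simp

lemma A_up: "y \<le> y' \<Longrightarrow> bA (x (i,y)) \<Longrightarrow> bA (x (i,y'))"
  by (rule up_mono[where P="\<lambda>y. bA (x (i,y))"]) (auto intro: A_up1)

lemma C_down: "y \<le> y' \<Longrightarrow> bC (x (i,y')) \<Longrightarrow> bC (x (i,y))"
  by (rule down_mono[where P="\<lambda>y. bC (x (i,y))"]) (auto intro: C_down1)

lemma T_down: "y \<le> y' \<Longrightarrow> bT (x (i,y')) \<Longrightarrow> bT (x (i,y))"
  by (rule down_mono[where P="\<lambda>y. bT (x (i,y))"]) (auto intro: T_down1)

end



definition stripR :: "config \<Rightarrow> int \<Rightarrow> bool" where
  "stripR x y \<longleftrightarrow> bA (x (0,y)) \<and> bC (x (0,y))"
definition Fs :: "config \<Rightarrow> int set" where "Fs x = {i. \<exists>y. bF (x (i,y))}"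
definition Sat :: "config \<Rightarrow> int \<Rightarrow> bool" where "Sat x i \<longleftrightarrow> (\<forall>y. stripR x y \<longrightarrow> bT (x (i,y)))"
definition Ss :: "config \<Rightarrow> int set" where "Ss x = {i. \<not> Sat x i \<and> Sat x (i+1) \<and> i+1 \<notin> Fs x}"

lemma ivt:
  fixes a b :: int
  assumes "\<not> P a" "P b" "a \<le> b"
  shows "\<exists>z. a < z \<and> z \<le> b \<and> \<not> P (z-1) \<and> P z"
proof -
  have "P b \<longrightarrow> (\<exists>z. a < z \<and> z \<le> b \<and> \<not> P (z-1) \<and> P z)"
    using assms(3)
  proof (induction b rule: int_ge_induct)
    case base then show ?case using assms(1) by simp
  next
    case (step i)
    show ?case
    proof
      assume "P (i+1)"
      show "\<exists>z>a. z \<le> i + 1 \<and> \<not> P (z - 1) \<and> P z"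
      proof (cases "P i")
        case True
        then show ?thesis using step by force
      next
        case False
        then show ?thesis using \<open>P (i+1)\<close> step(1) by (intro exI[of _ "i+1"]) simp
      qed
    qed
  qed
  then show ?thesis using assms(2) by blast
qed

context
  fixes x assumes x: "x \<in> XX"
begin

lemma strip_row: "strip (x (i,y)) = stripR x y"
  using A_row[OF x, of i y] C_row[OF x, of i y] by (simp add: strip_def stripR_def)

lemma stripR_between: "stripR x y \<Longrightarrow> stripR x y' \<Longrightarrow> y \<le> z \<Longrightarrow> z \<le> y' \<Longrightarrow> stripR x z"
  unfolding stripR_def using A_up[OF x, of y z 0] C_down[OF x, of z y' 0] by blast

lemma Fcol_le: "stripR x y \<Longrightarrow> stripR x y' \<Longrightarrow> y \<le> y' \<Longrightarrow> bF (x (i,y)) = bF (x (i,y'))"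
proof -
  assume sy: "stripR x y" and sy': "stripR x y'" and le: "y \<le> y'"
  have "z \<le> y' \<longrightarrow> bF (x (i,z)) = bF (x (i,y))" if "y \<le> z" for z
    using that
  proof (induction z rule: int_ge_induct)
    case (step z)
    show ?case
    proof
      assume "z + 1 \<le> y'"
      have "stripR x z" using stripR_between[OF sy sy' step(1)] \<open>z+1 \<le> y'\<close> by simp
      moreover have "stripR x (z+1)" using stripR_between[OF sy sy', of "z+1"] step(1) \<open>z+1 \<le> y'\<close> by simp
      ultimately have "bF (x (i,z)) = bF (x (i,z+1))"
        using F_vert1[OF x, of i z] strip_row[of i z] strip_row[of i "z+1"] by simp
      then show "bF (x (i, z + 1)) = bF (x (i, y))" using step \<open>z+1 \<le> y'\<close> by simp
    qed
  qed simp
  from this[of y'] show ?thesis using le by simp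
qed

lemma Fcol: "stripR x y \<Longrightarrow> stripR x y' \<Longrightarrow> bF (x (i,y)) = bF (x (i,y'))"
  using Fcol_le by (metis linorder_le_cases)

lemma F_iff: "bF (x (i,y)) \<longleftrightarrow> stripR x y \<and> i \<in> Fs x"
proof
  assume "bF (x (i,y))"
  then show "stripR x y \<and> i \<in> Fs x"
    using F_AC[OF x] strip_row by (auto simp: strip_def Fs_def)
next
  assume a: "stripR x y \<and> i \<in> Fs x"
  then obtain y' where "bF (x (i,y'))" by (auto simp: Fs_def)
  moreover then have "stripR x y'" using F_AC[OF x] strip_row by (auto simp: strip_def)
  ultimately show "bF (x (i,y))" using Fcol a by blast
qed

lemma Sat_step: "Sat x i \<Longrightarrow> i+1 \<notin> Fs x \<Longrightarrow> Sat x (i+1)"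
  unfolding Sat_def
proof (intro allI impI)
  fix y assume S: "\<forall>y. stripR x y \<longrightarrow> bT (x (i, y))" and nF: "i+1 \<notin> Fs x" and sy: "stripR x y"
  have "bT (x (i+1,y)) = bT (x (i,y-1))"
    using timer_nF[OF x, of i "y-1"] strip_row[of "i+1" y] sy F_iff[of "i+1" y] nF by simp
  moreover have "bT (x (i,y-1))"
  proof (cases "bA (x (i,y-1))")
    case True
    have "bC (x (i,y))" using sy C_row[OF x, of i y] by (simp add: stripR_def)
    then have "bC (x (i,y-1))" using C_down[OF x, of "y-1" y i] by simp
    then have "stripR x (y-1)" using True strip_row[of i "y-1"] by (simp add: strip_def)
    then show ?thesis using S by blast
  next
    case False
    then show ?thesis using notA[OF x] by blast
  qed
  ultimately show "bT (x (i + 1, y))" by simp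
qed

lemma Sat_range: "a \<le> b \<Longrightarrow> Sat x a \<Longrightarrow> (\<forall>j. a < j \<and> j \<le> b \<longrightarrow> j \<notin> Fs x) \<Longrightarrow> Sat x b"
proof (induction b rule: int_ge_induct)
  case (step i)
  then show ?case using Sat_step by simp
qed simp

lemma L1: "p \<in> Fs x \<Longrightarrow> (\<forall>j. p < j \<and> j \<le> p + int k \<longrightarrow> j \<notin> Fs x) \<Longrightarrow>
   bT (x (p + int k, y)) \<Longrightarrow> \<not> bA (x (0, y - int k))"
proof (induction k arbitrary: y)
  case 0
  show ?case
  proof
    assume a: "bA (x (0, y - int 0))"
    have "bC (x (p,y))" using 0 T_C[OF x] by simp
    then have sy: "stripR x y" using a C_row[OF x, of p y] by (simp add: stripR_def)
    then have "bF (x (p,y))" using F_iff 0 by simp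
    then show False using timer_F[OF x, of "p-1" "y-1"] strip_row[of p y] sy 0 by simp
  qed
next
  case (Suc k)
  show ?case
  proof
    assume a: "bA (x (0, y - int (Suc k)))"
    have a1: "bA (x (0, y - 1))" using A_up[OF x, of "y - int (Suc k)" "y-1" 0] a by simp
    have a0: "bA (x (0, y))" using A_up[OF x, of "y - int (Suc k)" "y" 0] a by simp
    have e: "p + int (Suc k) = p + int k + 1" by simp
    have t: "bT (x (p + int k + 1, y))" using Suc.prems(3) unfolding e .
    then have "bC (x (p + int k + 1, y))" using T_C[OF x] by blast
    then have sy: "stripR x y" using a0 C_row[OF x, of "p + int k + 1" y] by (simp add: stripR_def)
    have nF: "p + int k + 1 \<notin> Fs x" using Suc.prems(2)[rule_format, of "p + int k + 1"] by simp
    have "bT (x (p + int k + 1, y)) = bT (x (p + int k, y - 1))"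
      using timer_nF[OF x, of "p + int k" "y-1"] strip_row[of "p + int k + 1" y] sy F_iff[of "p + int k + 1" y] nF
      by simp
    then have "bT (x (p + int k, y - 1))" using t by simp
    moreover have "\<forall>j. p < j \<and> j \<le> p + int k \<longrightarrow> j \<notin> Fs x"
    proof (intro allI impI)
      fix j assume "p < j \<and> j \<le> p + int k"
      then show "j \<notin> Fs x" using Suc.prems(2)[rule_format, of j] by simp
    qed
    ultimately have "\<not> bA (x (0, y - 1 - int k))" using Suc.IH Suc.prems(1) by blast
    moreover have "y - int (Suc k) = y - 1 - int k" by simp
    ultimately show False using a by metis
  qed
qed

lemma next_feature:
  assumes "p \<in> Fs x" "q \<in> Fs x" "p < q"
  shows "\<exists>k. p + int k + 1 \<in> Fs x \<and> (\<forall>j. p < j \<and> j \<le> p + int k \<longrightarrow> j \<notin> Fs x)"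
proof -
  define K where "K = (LEAST k::nat. p + int k + 1 \<in> Fs x)"
  have e: "int (nat (q - p - 1)) = q - p - 1" using assms(3) by linarith
  have w: "p + int (nat (q - p - 1)) + 1 \<in> Fs x" unfolding e using assms(2) by simp
  have "\<exists>k. p + int k + 1 \<in> Fs x" using w by blast
  then have "p + int K + 1 \<in> Fs x" unfolding K_def by (rule LeastI_ex)
  moreover have "j \<notin> Fs x" if "p < j" "j \<le> p + int K" for j
  proof
    assume "j \<in> Fs x"
    have e2: "int (nat (j - p - 1)) = j - p - 1" using that(1) by linarith
    have "p + int (nat (j - p - 1)) + 1 \<in> Fs x" unfolding e2 using \<open>j \<in> Fs x\<close> by simp
    then have "K \<le> nat (j - p - 1)" unfolding K_def by (rule Least_le)
    then have "int K \<le> j - p - 1" using e2 by linarith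
    then show False using that(2) by linarith
  qed
  ultimately show ?thesis by blast
qed

lemma gap:
  assumes "p \<in> Fs x" "\<forall>j. p < j \<and> j \<le> p + int k \<longrightarrow> j \<notin> Fs x" "p + int k + 1 \<in> Fs x" "stripR x y"
  shows "\<not> bA (x (0, y - int k))"
proof -
  have "bF (x (p + int k + 1, y))" using F_iff assms by simp
  then have "bT (x (p + int k, y)) = bC (x (p + int k, y))"
    using timer_F[OF x, of "p + int k" "y-1"] strip_row[of "p + int k + 1" y] assms(4) by simp
  moreover have "bC (x (p + int k, y))" using assms(4) C_row[OF x, of "p + int k" y] by (simp add: stripR_def)
  ultimately show ?thesis using L1 assms by blast
qed

end



context
  fixes x assumes x: "x \<in> XX"
begin

lemma Fs_strip: "i \<in> Fs x \<Longrightarrow> \<exists>y. stripR x y"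
proof -
  assume "i \<in> Fs x"
  then obtain y where "bF (x (i,y))" by (auto simp: Fs_def)
  then show ?thesis using F_iff[OF x, of i y] by blast
qed

lemma Fs_sub1:
  assumes "(\<forall>y. bA (x (0,y))) \<or> (\<forall>y. bC (x (0,y)))"
    and "p \<in> Fs x" "q \<in> Fs x"
  shows "p = q"
proof (rule ccontr)
  assume "p \<noteq> q"
  have "False" if pq: "p < q" "p \<in> Fs x" "q \<in> Fs x" for p q
  proof -
    obtain k where k: "p + int k + 1 \<in> Fs x" "\<forall>j. p < j \<and> j \<le> p + int k \<longrightarrow> j \<notin> Fs x"
      using next_feature[OF x pq(2) pq(3) pq(1)] by blast
    obtain y0 where y0: "stripR x y0" using Fs_strip pq(2) by blast
    show False using assms(1)
    proof
      assume A: "\<forall>y. bA (x (0,y))"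
      have "\<not> bA (x (0, y0 - int k))" using gap[OF x pq(2) k(2) k(1) y0] .
      then show False using A by blast
    next
      assume C: "\<forall>y. bC (x (0,y))"
      have "bA (x (0, y0 + int k))" using A_up[OF x, of y0 "y0 + int k" 0] y0 by (simp add: stripR_def)
      then have "stripR x (y0 + int k)" using C by (simp add: stripR_def)
      then have "\<not> bA (x (0, y0 + int k - int k))" using gap[OF x pq(2) k(2) k(1)] by blast
      then show False using y0 by (simp add: stripR_def)
    qed
  qed
  then show False using \<open>p \<noteq> q\<close> assms(2,3) by (metis linorder_neqE)
qed

definition Sb :: "int \<Rightarrow> int set" where "Sb i = {y. stripR x y \<and> bB (x (i,y))}"

lemma Sb_nF: "i+1 \<notin> Fs x \<Longrightarrow> Sb (i+1) = Sb i"
proof -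
  assume nF: "i+1 \<notin> Fs x"
  have "bB (x (i+1,y)) = bB (x (i,y))" if "stripR x y" for y
    using budget_nF[OF x, of i y] strip_row[OF x, of "i+1" y] F_iff[OF x, of "i+1" y] nF that by simp
  then show ?thesis unfolding Sb_def by blast
qed

context
  fixes y1 y2 Y
  assumes y1: "\<not> bA (x (0,y1))" and y2: "\<not> bC (x (0,y2))" and Y: "stripR x Y" "\<not> bA (x (0,Y-1))"
begin

lemma strip_bd: "stripR x y \<Longrightarrow> y \<in> {y1<..<y2}"
proof -
  assume s: "stripR x y"
  have "\<not> y \<le> y1"
  proof
    assume "y \<le> y1"
    then have "bA (x (0,y1))" using A_up[OF x, of y y1 0] s by (simp add: stripR_def)
    then show False using y1 by simp
  qed
  moreover have "\<not> y2 \<le> y"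
  proof
    assume "y2 \<le> y"
    then have "bC (x (0,y2))" using C_down[OF x, of y2 y 0] s by (simp add: stripR_def)
    then show False using y2 by simp
  qed
  ultimately show ?thesis by simp
qed

lemma Sb_fin: "finite (Sb i)" "card (Sb i) \<le> card {y1<..<y2}"
proof -
  have sub: "Sb i \<subseteq> {y1<..<y2}" using strip_bd unfolding Sb_def by blast
  show "finite (Sb i)" by (rule finite_subset[OF sub]) simp
  show "card (Sb i) \<le> card {y1<..<y2}" by (rule card_mono[OF _ sub]) simp
qed

lemma Sb_F: "i+1 \<in> Fs x \<Longrightarrow> card (Sb (i+1)) < card (Sb i)"
proof -
  assume F: "i+1 \<in> Fs x"
  have sub: "(\<lambda>y. y+1) ` Sb (i+1) \<subseteq> Sb i - {Y}"
  proof
    fix z assume "z \<in> (\<lambda>y. y+1) ` Sb (i+1)"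
    then obtain y where z: "z = y+1" and s: "stripR x y" and b: "bB (x (i+1,y))"
      by (auto simp: Sb_def)
    have "bF (x (i+1,y))" using F_iff[OF x, of "i+1" y] s F by simp
    then have b': "bB (x (i,y+1))"
      using budget_F[OF x, of i y] strip_row[OF x, of "i+1" y] s b by simp
    have "bA (x (0,y+1))" using A_up[OF x, of y "y+1" 0] s by (simp add: stripR_def)
    moreover have "bC (x (0,y+1))" using B_C[OF x b'] C_row[OF x, of i "y+1"] by simp
    ultimately have "stripR x (y+1)" by (simp add: stripR_def)
    moreover have "y+1 \<noteq> Y"
    proof
      assume "y+1 = Y"
      then have "y = Y - 1" by simp
      then show False using s Y(2) by (simp add: stripR_def)
    qed
    ultimately show "z \<in> Sb i - {Y}" using z b' by (simp add: Sb_def)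
  qed
  have YS: "Y \<in> Sb i"
  proof -
    have "bF (x (i+1,Y))" using F_iff[OF x, of "i+1" Y] Y(1) F by simp
    moreover have "\<not> bA (x (i+1,Y-1))" using A_row[OF x, of "i+1" "Y-1"] Y(2) by simp
    ultimately have "bB (x (i,Y))" using pos[OF x, of i "Y-1"] by simp
    then show ?thesis using Y(1) by (simp add: Sb_def)
  qed
  have "card (Sb (i+1)) = card ((\<lambda>y. y+1) ` Sb (i+1))" by (simp add: card_image)
  also have "\<dots> \<le> card (Sb i - {Y})" using sub Sb_fin(1)[of i] by (intro card_mono) auto
  also have "\<dots> < card (Sb i)" by (rule card_Diff1_less[OF Sb_fin(1)[of i] YS])
  finally show ?thesis .
qed

lemma Sb_step: "card (Sb (i+1)) \<le> card (Sb i)"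
  using Sb_nF Sb_F by (cases "i+1 \<in> Fs x") (auto simp del: One_nat_def, fastforce)

lemma Sb_mono: "a \<le> b \<Longrightarrow> card (Sb b) \<le> card (Sb a)"
proof (induction b rule: int_ge_induct)
  case (step i)
  then show ?case using Sb_step[of i] by linarith
qed simp

lemma Fs_fin_bd: "finite (Fs x)"
proof (rule inj_on_finite[where f="\<lambda>i. card (Sb i)" and B="{..card {y1<..<y2}}"])
  show "inj_on (\<lambda>i. card (Sb i)) (Fs x)"
  proof (rule linorder_inj_onI')
    fix p q assume "p \<in> Fs x" "q \<in> Fs x" "p < q"
    have "card (Sb q) < card (Sb (q-1))" using Sb_F[of "q-1"] \<open>q \<in> Fs x\<close> by simp
    also have "\<dots> \<le> card (Sb p)" using Sb_mono[of p "q-1"] \<open>p < q\<close> by simp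
    finally show "card (Sb p) \<noteq> card (Sb q)" by simp
  qed
  show "(\<lambda>i. card (Sb i)) ` Fs x \<subseteq> {..card {y1<..<y2}}" using Sb_fin(2) by auto
qed simp

end

lemma Fs_finite: "finite (Fs x)"
proof (cases "\<exists>y. stripR x y")
  case False
  then have "Fs x = {}" using Fs_strip by blast
  then show ?thesis by simp
next
  case True
  then obtain y0 where y0: "stripR x y0" by blast
  show ?thesis
  proof (cases "(\<forall>y. bA (x (0,y))) \<or> (\<forall>y. bC (x (0,y)))")
    case True
    have "Fs x \<subseteq> {p}" if "p \<in> Fs x" for p using Fs_sub1[OF True that] by blast
    then show ?thesis by (metis finite.emptyI finite_insert finite_subset subsetI)
  next
    case False
    then obtain y1 y2 where y1: "\<not> bA (x (0,y1))" and y2: "\<not> bC (x (0,y2))" by blast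
    have "y1 < y0"
    proof (rule ccontr)
      assume "\<not> y1 < y0"
      then have "bA (x (0,y1))" using A_up[OF x, of y0 y1 0] y0 by (simp add: stripR_def)
      then show False using y1 by simp
    qed
    then obtain Y where Y: "y1 < Y" "Y \<le> y0" "\<not> bA (x (0,Y-1))" "bA (x (0,Y))"
      using ivt[of "\<lambda>y. bA (x (0,y))" y1 y0] y1 y0 by (auto simp: stripR_def)
    have "bC (x (0,Y))" using C_down[OF x, of Y y0 0] Y(2) y0 by (simp add: stripR_def)
    then have "stripR x Y" using Y(4) by (simp add: stripR_def)
    then show ?thesis using Fs_fin_bd[OF y1 y2 _ Y(3)] by blast
  qed
qed

definition psi :: "int \<Rightarrow> int option" where
  "psi i = (if {p\<in>Fs x. p \<le> i} = {} then None else Some (Max {p\<in>Fs x. p \<le> i}))"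

lemma Ss_feature: "i \<in> Ss x \<Longrightarrow> i' \<in> Ss x \<Longrightarrow> i < i' \<Longrightarrow> \<exists>p\<in>Fs x. i < p \<and> p \<le> i'"
proof (rule ccontr)
  assume a: "i \<in> Ss x" "i' \<in> Ss x" "i < i'" and n: "\<not> (\<exists>p\<in>Fs x. i < p \<and> p \<le> i')"
  have "Sat x (i+1)" using a(1) by (simp add: Ss_def)
  moreover have "\<forall>j. i+1 < j \<and> j \<le> i' \<longrightarrow> j \<notin> Fs x" using n by auto
  ultimately have "Sat x i'" using Sat_range[OF x, of "i+1" i'] a(3) by simp
  then show False using a(2) by (simp add: Ss_def)
qed

lemma Ss_finite: "finite (Ss x)"
proof (rule inj_on_finite[where f=psi and B="insert None (Some ` Fs x)"])
  have fin: "finite {p\<in>Fs x. p \<le> i}" for i using Fs_finite by simp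
  show "inj_on psi (Ss x)"
  proof (rule linorder_inj_onI')
    fix i i' assume a: "i \<in> Ss x" "i' \<in> Ss x" "i < i'"
    obtain p where p: "p \<in> Fs x" "i < p" "p \<le> i'" using Ss_feature[OF a] by blast
    then have ne: "{q\<in>Fs x. q \<le> i'} \<noteq> {}" by blast
    have "p \<le> Max {q\<in>Fs x. q \<le> i'}" using p fin[of i'] by (intro Max_ge) auto
    then have psi': "psi i' = Some (Max {q\<in>Fs x. q \<le> i'})" "i < Max {q\<in>Fs x. q \<le> i'}"
      using ne p by (auto simp: psi_def)
    show "psi i \<noteq> psi i'"
    proof (cases "{q\<in>Fs x. q \<le> i} = {}")
      case True
      then show ?thesis using psi' by (simp add: psi_def)
    next
      case False
      then have "Max {q\<in>Fs x. q \<le> i} \<in> {q\<in>Fs x. q \<le> i}" using fin[of i] by (intro Max_in) auto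
      then have "Max {q\<in>Fs x. q \<le> i} \<le> i" by simp
      then show ?thesis using psi' False by (auto simp: psi_def)
    qed
  qed
  show "psi ` Ss x \<subseteq> insert None (Some ` Fs x)"
  proof
    fix z assume "z \<in> psi ` Ss x"
    then obtain i where z: "z = psi i" by blast
    show "z \<in> insert None (Some ` Fs x)"
    proof (cases "{q\<in>Fs x. q \<le> i} = {}")
      case False
      then have "Max {q\<in>Fs x. q \<le> i} \<in> {q\<in>Fs x. q \<le> i}" using fin[of i] by (intro Max_in) auto
      then show ?thesis using z False by (auto simp: psi_def)
    qed (simp add: z psi_def)
  qed
  show "finite (insert None (Some ` Fs x))" using Fs_finite by simp
qed

end



context
  fixes x assumes x: "x \<in> XX"
begin

lemma fwd_F: "bF (x (i+1,y)) = (bA (x (i,y)) \<and> bC (x (i,y)) \<and> i+1 \<in> Fs x)"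
  using F_iff[OF x, of "i+1" y] strip_row[OF x, of i y] unfolding strip_def by blast

lemma fwd_B: "bB (x (i+1,y)) = (if \<not> bA (x (i,y)) then True else if \<not> bC (x (i,y)) then False
    else if i+1 \<in> Fs x then bB (x (i,y+1)) else bB (x (i,y)))"
proof -
  have hA: "bA (x (i+1,y)) = bA (x (i,y))" by (rule A_h[OF x])
  have hC: "bC (x (i+1,y)) = bC (x (i,y))" by (rule C_h[OF x])
  show ?thesis
  proof (cases "bA (x (i,y)) \<and> bC (x (i,y))")
    case False
    then show ?thesis using notA[OF x, of "i+1" y] B_C[OF x, of "i+1" y] hA hC by auto
  next
    case True
    then have s: "strip (x (i+1,y))" using hA hC by (simp add: strip_def)
    have f: "bF (x (i+1,y)) = (i+1 \<in> Fs x)" using fwd_F True by simp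
    show ?thesis using budget_F[OF x, of i y] budget_nF[OF x, of i y] s f True by auto
  qed
qed

lemma fwd_T: "bT (x (i+1,y)) = (if \<not> bA (x (i,y)) then True else if \<not> bC (x (i,y)) then False
    else if i+1 \<in> Fs x then False else bT (x (i,y-1)))"
proof -
  have hA: "bA (x (i+1,y)) = bA (x (i,y))" by (rule A_h[OF x])
  have hC: "bC (x (i+1,y)) = bC (x (i,y))" by (rule C_h[OF x])
  show ?thesis
  proof (cases "bA (x (i,y)) \<and> bC (x (i,y))")
    case False
    then show ?thesis using notA[OF x, of "i+1" y] T_C[OF x, of "i+1" y] hA hC by auto
  next
    case True
    then have s: "strip (x (i+1,y))" using hA hC by (simp add: strip_def)
    have f: "bF (x (i+1,y)) = (i+1 \<in> Fs x)" using fwd_F True by simp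
    show ?thesis using timer_F[OF x, of i "y-1"] timer_nF[OF x, of i "y-1"] s f True by auto
  qed
qed

lemma bwd_F: "bF (x (i,y)) = (bA (x (i+1,y)) \<and> bC (x (i+1,y)) \<and> i \<in> Fs x)"
  using F_iff[OF x, of i y] strip_row[OF x, of "i+1" y] unfolding strip_def by blast

lemma bwd_B: "bB (x (i,y)) = (if \<not> bA (x (i+1,y)) then True else if \<not> bC (x (i+1,y)) then False
    else if i+1 \<notin> Fs x then bB (x (i+1,y)) else if bA (x (i+1,y-1)) then bB (x (i+1,y-1)) else True)"
proof -
  have hA: "bA (x (i+1,y)) = bA (x (i,y))" by (rule A_h[OF x])
  have hC: "bC (x (i+1,y)) = bC (x (i,y))" by (rule C_h[OF x])
  show ?thesis
  proof (cases "bA (x (i+1,y)) \<and> bC (x (i+1,y))")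
    case False
    then show ?thesis using notA[OF x, of i y] B_C[OF x, of i y] hA hC by auto
  next
    case True
    then have s: "strip (x (i+1,y))" by (simp add: strip_def)
    have sR: "stripR x y" using s strip_row[OF x, of "i+1" y] by simp
    have f: "bF (x (i+1,y)) = (i+1 \<in> Fs x)" using F_iff[OF x, of "i+1" y] sR by simp
    show ?thesis
    proof (cases "i+1 \<in> Fs x")
      case False
      then show ?thesis using budget_nF[OF x, of i y] s f True by auto
    next
      case F: True
      show ?thesis
      proof (cases "bA (x (i+1,y-1))")
        case True
        have "bC (x (i+1,y-1))" using C_down[OF x, of "y-1" y "i+1"] \<open>bA (x (i+1,y)) \<and> bC (x (i+1,y))\<close> by simp
        then have s': "strip (x (i+1,y-1))" using True by (simp add: strip_def)
        have f': "bF (x (i+1,y-1))" using F_iff[OF x, of "i+1" "y-1"] strip_row[OF x, of "i+1" "y-1"] s' F by simp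
        show ?thesis using budget_F[OF x, of i "y-1"] s' f' True F \<open>bA (x (i+1,y)) \<and> bC (x (i+1,y))\<close> by simp
      next
        case False
        have "bB (x (i,y))" using pos[OF x, of i "y-1"] False f F by simp
        then show ?thesis using False F \<open>bA (x (i+1,y)) \<and> bC (x (i+1,y))\<close> by simp
      qed
    qed
  qed
qed

lemma Sat_col: "Sat x j = (\<forall>y. bA (x (j,y)) \<and> bC (x (j,y)) \<longrightarrow> bT (x (j,y)))"
proof -
  have "stripR x y = (bA (x (j,y)) \<and> bC (x (j,y)))" for y
    using strip_row[OF x, of j y] by (simp add: strip_def)
  then show ?thesis by (simp add: Sat_def)
qed

lemma bwd_T: "bT (x (i,y)) = (if \<not> bA (x (i+1,y)) then True else if \<not> bC (x (i+1,y)) then False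
    else if i+1 \<in> Fs x then True else if bC (x (i+1,y+1)) then bT (x (i+1,y+1))
    else (Sat x (i+1) \<and> i \<notin> Ss x))"
proof -
  have hA: "bA (x (i+1,y)) = bA (x (i,y))" by (rule A_h[OF x])
  have hC: "bC (x (i+1,y)) = bC (x (i,y))" by (rule C_h[OF x])
  show ?thesis
  proof (cases "bA (x (i+1,y)) \<and> bC (x (i+1,y))")
    case False
    then show ?thesis using notA[OF x, of i y] T_C[OF x, of i y] hA hC by auto
  next
    case AC: True
    then have s: "strip (x (i,y))" using hA hC by (simp add: strip_def)
    have sR: "stripR x y" using s strip_row[OF x, of i y] by simp
    show ?thesis
    proof (cases "i+1 \<in> Fs x")
      case F: True
      have "strip (x (i+1,y))" using AC by (simp add: strip_def)
      moreover have "bF (x (i+1,y))" using F_iff[OF x, of "i+1" y] sR F by simp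
      ultimately have "bT (x (i,y)) = bC (x (i,y))" using timer_F[OF x, of i "y-1"] by simp
      then show ?thesis using AC hC F by simp
    next
      case nF: False
      show ?thesis
      proof (cases "bC (x (i+1,y+1))")
        case True
        have "bA (x (i+1,y+1))" using A_up1[OF x, of "i+1" y] AC by simp
        then have s1: "strip (x (i+1,y+1))" using True by (simp add: strip_def)
        have "\<not> bF (x (i+1,y+1))"
          using F_iff[OF x, of "i+1" "y+1"] nF by simp
        then have "bT (x (i+1,y+1)) = bT (x (i,y))" using timer_nF[OF x, of i y] s1 by simp
        then show ?thesis using AC nF True by simp
      next
        case False
        have top: "bT (x (i,y)) = Sat x i"
        proof
          assume t: "bT (x (i,y))"
          show "Sat x i" unfolding Sat_def
          proof (intro allI impI)
            fix y' assume sy': "stripR x y'"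
            have "y' \<le> y"
            proof (rule ccontr)
              assume "\<not> y' \<le> y"
              then have "y + 1 \<le> y'" by simp
              then have "bC (x (0,y+1))" using C_down[OF x, of "y+1" y' 0] sy' by (simp add: stripR_def)
              then show False using False C_row[OF x, of "i+1" "y+1"] by simp
            qed
            then show "bT (x (i,y'))" using T_down[OF x, of y' y i] t by simp
          qed
        next
          assume "Sat x i" then show "bT (x (i,y))" using sR by (simp add: Sat_def)
        qed
        have "Sat x i = (Sat x (i+1) \<and> i \<notin> Ss x)"
        proof (cases "Sat x i")
          case True
          then show ?thesis using Sat_step[OF x True nF] by (simp add: Ss_def)
        next
          case False
          then show ?thesis using nF by (auto simp: Ss_def)
        qed
        then show ?thesis using top AC nF False by simp
      qed
    qed
  qed
qed

end

lemma cell_eq: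
  assumes "x \<in> XX" "x' \<in> XX" "bA (x u) = bA (x' u)" "bC (x u) = bC (x' u)" "bB (x u) = bB (x' u)"
    "bT (x u) = bT (x' u)" "bF (x u) = bF (x' u)"
  shows "x u = x' u"
proof -
  have e1: "code (bA (x u)) (bC (x u)) (bB (x u)) (bT (x u)) (bF (x u)) = x u"
    by (rule code_decomp[OF ltX[OF assms(1), of u]])
  have e2: "code (bA (x' u)) (bC (x' u)) (bB (x' u)) (bT (x' u)) (bF (x' u)) = x' u"
    by (rule code_decomp[OF ltX[OF assms(2), of u]])
  have "code (bA (x u)) (bC (x u)) (bB (x u)) (bT (x u)) (bF (x u)) =
        code (bA (x' u)) (bC (x' u)) (bB (x' u)) (bT (x' u)) (bF (x' u))"
    by (simp only: assms(3-7))
  then show ?thesis using e1 e2 by simp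
qed

lemma uniq:
  assumes xX: "x \<in> XX" and x'X: "x' \<in> XX" and c0: "\<forall>y. x (0,y) = x' (0,y)"
    and F: "Fs x = Fs x'" and S: "Ss x = Ss x'"
  shows "x = x'"
proof -
  have "\<forall>y. x (i,y) = x' (i,y)" for i
  proof (induction i rule: int_induct[where k=0])
    case base then show ?case using c0 .
  next
    case (step1 i)
    show ?case
    proof
      fix y
      show "x (i+1,y) = x' (i+1,y)"
        apply (rule cell_eq[OF xX x'X])
        using A_h[OF xX, of i y] A_h[OF x'X, of i y] C_h[OF xX, of i y] C_h[OF x'X, of i y]
          fwd_B[OF xX, of i y] fwd_B[OF x'X, of i y] fwd_T[OF xX, of i y] fwd_T[OF x'X, of i y]
          fwd_F[OF xX, of i y] fwd_F[OF x'X, of i y] step1.IH F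
        by simp_all
    qed
  next
    case (step2 i)
    have IH: "\<forall>y. x (i - 1 + 1, y) = x' (i - 1 + 1, y)" using step2.IH by simp
    have Sat_eq: "Sat x (i - 1 + 1) = Sat x' (i - 1 + 1)"
      using Sat_col[OF xX, of "i-1+1"] Sat_col[OF x'X, of "i-1+1"] IH by simp
    show ?case
    proof
      fix y
      show "x (i-1,y) = x' (i-1,y)"
        apply (rule cell_eq[OF xX x'X])
        using A_h[OF xX, of "i-1" y] A_h[OF x'X, of "i-1" y] C_h[OF xX, of "i-1" y] C_h[OF x'X, of "i-1" y]
          bwd_B[OF xX, of "i-1" y] bwd_B[OF x'X, of "i-1" y] bwd_T[OF xX, of "i-1" y] bwd_T[OF x'X, of "i-1" y]
          bwd_F[OF xX, of "i-1" y] bwd_F[OF x'X, of "i-1" y] IH F S Sat_eq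
        by simp_all
    qed
  qed
  then show ?thesis by (intro ext) auto
qed



definition Mup :: "int set set" where "Mup = {S. \<forall>y\<in>S. y+1 \<in> S}"
definition Mdn :: "int set set" where "Mdn = {S. \<forall>y\<in>S. y-1 \<in> S}"

lemma Mup_sub: "Mup \<subseteq> insert {} (insert UNIV (range atLeast))"
proof
  fix S assume S: "S \<in> Mup"
  have st: "\<And>y. y \<in> S \<Longrightarrow> y + 1 \<in> S" using S by (simp add: Mup_def)
  show "S \<in> insert {} (insert UNIV (range atLeast))"
  proof (cases "S = {} \<or> S = UNIV")
    case True then show ?thesis by auto
  next
    case False
    then obtain z s where z: "z \<notin> S" and s: "s \<in> S" by blast
    have low: "z < t" if "t \<in> S" for t
    proof (rule ccontr)
      assume "\<not> z < t"
      then have "z \<in> S" using up_mono[of "\<lambda>y. y \<in> S" t z] st that by simp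
      then show False using z by simp
    qed
    define K where "K = (LEAST k::nat. z + int k \<in> S)"
    have ex: "\<exists>k::nat. z + int k \<in> S"
      using s low[OF s] by (intro exI[of _ "nat (s - z)"]) simp
    have mS: "z + int K \<in> S" unfolding K_def by (rule LeastI_ex[OF ex])
    have "S = {z + int K..}"
    proof
      show "S \<subseteq> {z + int K..}"
      proof
        fix t assume t: "t \<in> S"
        have e: "z + int (nat (t - z)) = t" using low[OF t] by simp
        have "K \<le> nat (t - z)" unfolding K_def by (rule Least_le) (subst e, rule t)
        then show "t \<in> {z + int K..}" using low[OF t] by simp
      qed
      show "{z + int K..} \<subseteq> S"
      proof
        fix t assume "t \<in> {z + int K..}"
        then show "t \<in> S" using up_mono[of "\<lambda>y. y \<in> S" "z + int K" t] st mS by simp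
      qed
    qed
    then show ?thesis by blast
  qed
qed

lemma countable_Mup: "countable Mup"
  by (rule countable_subset[OF Mup_sub]) auto

lemma Mdn_sub: "Mdn \<subseteq> (\<lambda>S. uminus ` S) ` Mup"
proof
  fix S assume S: "S \<in> Mdn"
  have "uminus ` S \<in> Mup"
    unfolding Mup_def
  proof (rule CollectI, rule ballI)
    fix y assume "y \<in> uminus ` S"
    then obtain s where "s \<in> S" "y = - s" by blast
    then have "s - 1 \<in> S" using S by (simp add: Mdn_def)
    then show "y + 1 \<in> uminus ` S" using \<open>y = - s\<close> by (intro image_eqI[of _ _ "s - 1"]) auto
  qed
  moreover have "S = uminus ` (uminus ` S)" by (simp add: image_image)
  ultimately show "S \<in> (\<lambda>S. uminus ` S) ` Mup" by blast
qed

lemma countable_Mdn: "countable Mdn"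
  by (rule countable_subset[OF Mdn_sub]) (simp add: countable_Mup)

definition colf :: "int set \<times> int set \<times> int set \<times> int set \<times> bool \<Rightarrow> int \<Rightarrow> nat" where
  "colf = (\<lambda>(SA,SC,SB,ST,fl) y. code (y\<in>SA) (y\<in>SC) (y\<in>SB) (y\<in>ST) (fl \<and> y\<in>SA \<and> y\<in>SC))"

definition Cols :: "(int \<Rightarrow> nat) set" where "Cols = colf ` (Mup \<times> Mdn \<times> Mdn \<times> Mdn \<times> UNIV)"

lemma countable_Cols: "countable Cols"
  unfolding Cols_def
  by (intro countable_image countable_SIGMA countable_Mup countable_Mdn) auto

lemma col_in:
  assumes x: "x \<in> XX"
  shows "(\<lambda>y. x (0,y)) \<in> Cols"
proof -
  let ?SA = "{y. bA (x (0,y))}" and ?SC = "{y. bC (x (0,y))}" and ?SB = "{y. bB (x (0,y))}"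
    and ?ST = "{y. bT (x (0,y))}" and ?fl = "(0::int) \<in> Fs x"
  have "?SA \<in> Mup" using A_up1[OF x] by (simp add: Mup_def)
  moreover have "?SC \<in> Mdn" using C_down1[OF x, of 0] by (simp add: Mdn_def; metis diff_add_cancel)
  moreover have "?SB \<in> Mdn" using B_down1[OF x, of 0] by (simp add: Mdn_def; metis diff_add_cancel)
  moreover have "?ST \<in> Mdn" using T_down1[OF x, of 0] by (simp add: Mdn_def; metis diff_add_cancel)
  moreover have "(\<lambda>y. x (0,y)) = colf (?SA, ?SC, ?SB, ?ST, ?fl)"
  proof
    fix y
    have f: "bF (x (0,y)) = (?fl \<and> bA (x (0,y)) \<and> bC (x (0,y)))"
      using F_iff[OF x, of 0 y] by (auto simp: stripR_def)
    show "x (0,y) = colf (?SA, ?SC, ?SB, ?ST, ?fl) y"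
      using code_decomp[OF ltX[OF x, of "(0,y)"]] f by (simp add: colf_def)
  qed
  ultimately show ?thesis unfolding Cols_def by blast
qed

lemma countable_XX: "countable XX"
proof -
  define D where "D = (\<lambda>x::config. ((\<lambda>y. x (0,y)), Fs x, Ss x))"
  have "inj_on D XX"
  proof (rule inj_onI)
    fix x x' assume "x \<in> XX" "x' \<in> XX" "D x = D x'"
    then show "x = x'" using uniq[of x x'] by (auto simp: D_def fun_eq_iff)
  qed
  moreover have "D ` XX \<subseteq> Cols \<times> Collect finite \<times> Collect finite"
    using col_in Fs_finite Ss_finite by (auto simp: D_def)
  moreover have "countable (Cols \<times> Collect (finite :: int set \<Rightarrow> bool) \<times> Collect (finite :: int set \<Rightarrow> bool))"
    by (intro countable_SIGMA countable_Cols countable_Collect_finite)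
  ultimately show ?thesis
    using countable_image_inj_on countable_subset by blast
qed

theorem mainTheorem4:
  shows "\<exists>S X. is_SFT S X \<and> countable X \<and> (\<forall>n. cb_iter (Suc n) X \<noteq> cb_iter n X)"
  by (rule main_from_countable[OF countable_XX])


end
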